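(* Let $\{x_t\}_{t\in[0,1]}\in\mathscr H$ with covariance $C(s,t)=\tilde C(s-t)$, and let $\{y_t\}_{t\in[0,1]}\in\mathscr H_0$ be the process it generates, with covariance function $R(s,t)$. Let $0<\alpha\le1$. Then $\tilde C\in C^{0,\alpha}([0,1])$ implies $R\in C^{0,\alpha}([0,1]\times[0,1])$, and $R\in C^{0,\alpha}([0,1]\times[0,1])$ implies that, for every $\beta<\alpha/2$, suitable modifications $\{\tilde y_t\}$ of $y$ and $\{\tilde x_t\}$ of $x$ have almost all trajectories in $C^{0,\beta}([0,1])$.
   Context: $\mathscr H$ is the set of real zero-mean Gaussian processes on $[0,1]$ with covariance $\tilde C(s-t)$ for a continuous function $\tilde C$ and $x_0=x_1$ a.s. The process generated by $x\in\mathscr H$ is the zero-mean Gaussian process $y$ whose finite-dimensional laws equal those of $x$ conditioned on $x_0=0$; its covariance is $R(s,t)=C(s,t)-C(s,0)C(0,t)/C(0,0)$; $\mathscr H_0$ is the set of such $y$. $C^{0,\alpha}$ denotes the Hölder space with exponent $\alpha$. *)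

theory Defs
  imports "HOL-Probability.Probability"
begin

text \<open>Hoelder space C^{0,a}(D): f satisfies a Hoelder condition with exponent a on D
  (on the compact domains used here this also gives boundedness).\<close>
definition holder_on :: "real \<Rightarrow> 'a::metric_space set \<Rightarrow> ('a \<Rightarrow> 'b::metric_space) \<Rightarrow> bool" where
  "holder_on a D f \<longleftrightarrow> (\<exists>K. \<forall>p\<in>D. \<forall>q\<in>D. dist (f p) (f q) \<le> K * dist p q powr a)"

definition centered_gaussian_rv :: "'a measure \<Rightarrow> ('a \<Rightarrow> real) \<Rightarrow> bool" where
  "centered_gaussian_rv M X \<longleftrightarrow> X \<in> borel_measurable M \<and>
     (\<exists>\<sigma>\<ge>0. distr M borel X =
        (if \<sigma> = 0 then return borel 0 else density lborel (normal_density 0 \<sigma>)))"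

definition zero_mean_gaussian_process :: "'a measure \<Rightarrow> real set \<Rightarrow> (real \<Rightarrow> 'a \<Rightarrow> real) \<Rightarrow> bool" where
  "zero_mean_gaussian_process M T X \<longleftrightarrow> prob_space M \<and>
     (\<forall>t\<in>T. X t \<in> borel_measurable M) \<and>
     (\<forall>I c. finite I \<longrightarrow> I \<subseteq> T \<longrightarrow> centered_gaussian_rv M (\<lambda>\<omega>. \<Sum>i\<in>I. c i * X i \<omega>))"

definition cov_fun :: "'a measure \<Rightarrow> (real \<Rightarrow> 'a \<Rightarrow> real) \<Rightarrow> real \<Rightarrow> real \<Rightarrow> real" where
  "cov_fun M X s t = (\<integral>\<omega>. X s \<omega> * X t \<omega> \<partial>M)"

definition in_H :: "'a measure \<Rightarrow> (real \<Rightarrow> 'a \<Rightarrow> real) \<Rightarrow> (real \<Rightarrow> real) \<Rightarrow> bool" where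
  "in_H M x Ct \<longleftrightarrow> zero_mean_gaussian_process M {0..1} x \<and>
     continuous_on {-1..1} Ct \<and>
     (\<forall>s\<in>{0..1}. \<forall>t\<in>{0..1}. cov_fun M x s t = Ct (s - t)) \<and>
     (AE \<omega> in M. x 0 \<omega> = x 1 \<omega>)"

definition gen_cov :: "(real \<Rightarrow> real) \<Rightarrow> real \<Rightarrow> real \<Rightarrow> real" where
  "gen_cov Ct s t = Ct (s - t) - Ct (s - 0) * Ct (0 - t) / Ct 0"

definition generated_by :: "'b measure \<Rightarrow> (real \<Rightarrow> 'b \<Rightarrow> real) \<Rightarrow> (real \<Rightarrow> real) \<Rightarrow> bool" where
  "generated_by N y Ct \<longleftrightarrow> zero_mean_gaussian_process N {0..1} y \<and>
     (\<forall>s\<in>{0..1}. \<forall>t\<in>{0..1}. cov_fun N y s t = gen_cov Ct s t)"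

definition modification :: "'a measure \<Rightarrow> (real \<Rightarrow> 'a \<Rightarrow> real) \<Rightarrow> (real \<Rightarrow> 'a \<Rightarrow> real) \<Rightarrow> bool" where
  "modification M X X' \<longleftrightarrow> (\<forall>t\<in>{0..1}. X' t \<in> borel_measurable M \<and> (AE \<omega> in M. X' t \<omega> = X t \<omega>))"

end

theory Submission
  imports Defs
begin


lemma gauss_moment:
  assumes P: "prob_space M" and G: "centered_gaussian_rv M Z"
  shows "\<exists>\<sigma>\<ge>0. \<forall>k. integrable M (\<lambda>\<omega>. Z \<omega> ^ (2*k)) \<and>
            (\<integral>\<omega>. Z \<omega> ^ (2*k) \<partial>M) = \<sigma>^(2*k) * (fact (2*k) / (2^k * fact k))"
proof -
  interpret prob_space M by (rule P)
  from G have Zm[measurable]: "Z \<in> borel_measurable M" and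
    "\<exists>\<sigma>\<ge>0. distr M borel Z = (if \<sigma> = 0 then return borel 0 else density lborel (normal_density 0 \<sigma>))"
    unfolding centered_gaussian_rv_def by auto
  then obtain \<sigma> where s0: "\<sigma> \<ge> 0" and D: "distr M borel Z = (if \<sigma> = 0 then return borel 0 else density lborel (normal_density 0 \<sigma>))" by auto
  have I: "integrable M (\<lambda>\<omega>. Z \<omega> ^ (2*k)) \<longleftrightarrow> integrable (distr M borel Z) (\<lambda>x. x^(2*k))" for k
    by (subst integrable_distr_eq) auto
  have E: "(\<integral>\<omega>. Z \<omega> ^ (2*k) \<partial>M) = integral\<^sup>L (distr M borel Z) (\<lambda>x. x^(2*k))" for k
    by (subst integral_distr) auto
  show ?thesis
  proof (rule exI[of _ \<sigma>], rule conjI[OF s0], rule allI)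
    fix k :: nat
    show "integrable M (\<lambda>\<omega>. Z \<omega> ^ (2*k)) \<and>
            (\<integral>\<omega>. Z \<omega> ^ (2*k) \<partial>M) = \<sigma>^(2*k) * (fact (2*k) / (2^k * fact k))"
    proof (cases "\<sigma> = 0")
      case True
      have "integrable (return borel (0::real)) (\<lambda>x. x^(2*k))"
        by (simp add: integrable_iff_bounded nn_integral_return)
      then show ?thesis unfolding I E D using True
        by (cases k) (auto simp: integral_return measure_return)
    next
      case False
      then have sp: "\<sigma> > 0" using s0 by auto
      have hb: "has_bochner_integral lborel (\<lambda>x. normal_density 0 \<sigma> x * x ^ (2 * k)) (fact (2 * k) / ((2 / \<sigma>\<^sup>2)^k * fact k))"
        using normal_moment_even[OF sp, of 0 k] by simp
      have hb2: "has_bochner_integral (density lborel (normal_density 0 \<sigma>)) (\<lambda>x. x ^ (2 * k)) (fact (2 * k) / ((2 / \<sigma>\<^sup>2)^k * fact k))"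
        by (rule has_bochner_integral_density) (use hb in auto)
      have v: "fact (2 * k) / ((2 / \<sigma>\<^sup>2)^k * fact k) = \<sigma>^(2*k) * (fact (2*k) / (2^k * fact k))"
        using sp by (simp add: power_divide power_mult field_simps flip: power_mult_distrib power_mult)
      show ?thesis unfolding I E D using False integrable.intros[OF hb2] has_bochner_integral_integral_eq[OF hb2] v
        by simp
    qed
  qed
qed



lemma geom_conv:
  fixes a :: "nat \<Rightarrow> real"
  assumes step: "\<And>n. n \<ge> N \<Longrightarrow> \<bar>a (Suc n) - a n\<bar> \<le> c * r^n" and r: "0 \<le> r" "r < 1"
  shows "convergent a \<and> (\<forall>m\<ge>N. \<bar>lim a - a m\<bar> \<le> c * r^m / (1 - r))"
proof -
  have main: "a \<longlonglongrightarrow> a m + (\<Sum>i. a (Suc (i+m)) - a (i+m)) \<and> \<bar>(\<Sum>i. a (Suc (i+m)) - a (i+m))\<bar> \<le> c * r^m / (1 - r)"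
    if m: "m \<ge> N" for m
  proof -
    define b where "b = (\<lambda>i. a (Suc (i+m)) - a (i+m))"
    have sg: "summable (\<lambda>i. c * r^m * r^i)"
      using r by (intro summable_mult summable_geometric) auto
    have bb: "norm (b i) \<le> c * r^m * r^i" for i
      using step[of "i+m"] m by (simp add: b_def power_add mult_ac)
    have sb: "summable b" by (rule summable_comparison_test[OF _ sg]) (use bb in auto)
    have sab: "summable (\<lambda>i. norm (b i))" by (rule summable_comparison_test[OF _ sg]) (use bb in auto)
    have "(\<lambda>n. \<Sum>i<n. b i) \<longlonglongrightarrow> suminf b" using sb by (rule summable_LIMSEQ)
    moreover have "(\<Sum>i<n. b i) = a (n + m) - a m" for n
      unfolding b_def using sum_lessThan_telescope[of "\<lambda>i. a (i+m)" n] by simp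
    ultimately have "(\<lambda>n. a (n+m) - a m) \<longlonglongrightarrow> suminf b" by simp
    then have "(\<lambda>n. a (n+m) - a m + a m) \<longlonglongrightarrow> suminf b + a m" by (intro tendsto_intros)
    then have "(\<lambda>n. a (n+m)) \<longlonglongrightarrow> a m + suminf b" by (simp add: add.commute)
    then have L: "a \<longlonglongrightarrow> a m + suminf b" by (rule LIMSEQ_offset)
    have "\<bar>suminf b\<bar> \<le> (\<Sum>i. norm (b i))" using summable_norm[OF sab] by simp
    also have "\<dots> \<le> (\<Sum>i. c * r^m * r^i)" by (rule suminf_le) (use bb sab sg in auto)
    also have "\<dots> = c * r^m / (1 - r)" using r by (simp add: suminf_mult suminf_geometric)
    finally show ?thesis using L by (simp add: b_def)
  qed
  show ?thesis
  proof
    show "convergent a" using main[of N] by (auto simp: convergent_def)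
    show "\<forall>m\<ge>N. \<bar>lim a - a m\<bar> \<le> c * r ^ m / (1 - r)"
    proof (intro allI impI)
      fix m assume "N \<le> m"
      from main[OF this] show "\<bar>lim a - a m\<bar> \<le> c * r ^ m / (1 - r)"
        using limI by fastforce
    qed
  qed
qed

definition dy :: "nat \<Rightarrow> real \<Rightarrow> real" where
  "dy n t = of_int \<lfloor>2^n * t\<rfloor> / 2^n"

definition dyH :: "(real \<Rightarrow> real) \<Rightarrow> nat \<Rightarrow> real \<Rightarrow> bool" where
  "dyH f N r \<longleftrightarrow> (\<forall>n\<ge>N. \<forall>k::int. 0 \<le> k \<longrightarrow> k < 2^n \<longrightarrow>
      \<bar>f (of_int (k+1) / 2^n) - f (of_int k / 2^n)\<bar> \<le> r^n)"

lemma adjI: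
  assumes H: "dyH f N r" and r: "0 \<le> r" and n: "n \<ge> N"
    and ij: "0 \<le> i" "i \<le> j" "j \<le> i + 1" "j \<le> 2^n"
  shows "\<bar>f (of_int j / 2^n) - f (of_int i / 2^n)\<bar> \<le> r^n"
proof (cases "j = i")
  case True then show ?thesis using r by simp
next
  case False
  then have j: "j = i + 1" using ij by auto
  then show ?thesis using H n ij unfolding dyH_def by auto
qed

lemma dy_range:
  assumes "0 \<le> t" "t \<le> 1"
  shows "0 \<le> dy n t" "dy n t \<le> 1" "dy n t \<le> t" "t - dy n t \<le> 1 / 2^n"
    "0 \<le> \<lfloor>2^n * t\<rfloor>" "\<lfloor>2^n * t\<rfloor> \<le> 2^n"
proof -
  have p: "(0::real) < 2^n" by simp
  show f0: "0 \<le> \<lfloor>2^n * t\<rfloor>" using assms by simp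
  have "2^n * t \<le> 2^n" using assms by simp
  then show f1: "\<lfloor>2^n * t\<rfloor> \<le> 2^n"
    by (metis floor_mono floor_of_int of_int_numeral of_int_power)
  show "0 \<le> dy n t" unfolding dy_def using f0 by simp
  have "of_int \<lfloor>2^n * t\<rfloor> \<le> (2::real)^n" using f1 by (metis of_int_le_iff of_int_numeral of_int_power)
  then show "dy n t \<le> 1" unfolding dy_def by simp
  have a: "of_int \<lfloor>2^n * t\<rfloor> \<le> 2^n * t" by (rule of_int_floor_le)
  have b: "2^n * t < of_int \<lfloor>2^n * t\<rfloor> + 1" by (rule real_of_int_floor_add_one_gt)
  show "dy n t \<le> t" unfolding dy_def using a p by (simp add: divide_le_eq mult.commute)
  have "t - dy n t = (2^n*t - of_int \<lfloor>2^n * t\<rfloor>)/2^n" unfolding dy_def using p by (simp add: field_simps)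
  also have "\<dots> \<le> 1/2^n" by (intro divide_right_mono) (use b in linarith, simp)
  finally show "t - dy n t \<le> 1 / 2^n" .
qed

lemma floor_double:
  fixes x :: real
  shows "2 * \<lfloor>x\<rfloor> \<le> \<lfloor>2 * x\<rfloor>" "\<lfloor>2 * x\<rfloor> \<le> 2 * \<lfloor>x\<rfloor> + 1"
proof -
  have "of_int (2 * \<lfloor>x\<rfloor>) \<le> 2 * x" using of_int_floor_le[of x] by simp
  then show "2 * \<lfloor>x\<rfloor> \<le> \<lfloor>2 * x\<rfloor>" by (simp add: le_floor_iff)
  have "2 * x < of_int (2 * \<lfloor>x\<rfloor> + 2)" using real_of_int_floor_add_one_gt[of x] by linarith
  then have "\<lfloor>2 * x\<rfloor> < 2 * \<lfloor>x\<rfloor> + 2" by (simp add: floor_less_iff)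
  then show "\<lfloor>2 * x\<rfloor> \<le> 2 * \<lfloor>x\<rfloor> + 1" by simp
qed

lemma dy_step:
  assumes H: "dyH f N r" and r: "0 \<le> r" and n: "n \<ge> N" and t: "0 \<le> t" "t \<le> 1"
  shows "\<bar>f (dy (Suc n) t) - f (dy n t)\<bar> \<le> r * r^n"
proof -
  define a where "a = \<lfloor>2^n * t\<rfloor>"
  define b where "b = \<lfloor>2^(Suc n) * t\<rfloor>"
  have b2: "2 * a \<le> b" "b \<le> 2 * a + 1" unfolding a_def b_def
    using floor_double[of "2^n * t"] by (simp_all add: mult.assoc)
  have a0: "0 \<le> a" using dy_range[OF t] a_def by simp
  have bl: "b \<le> 2^Suc n" using dy_range[OF t, of "Suc n"] b_def by simp
  have e1: "dy n t = of_int (2*a) / 2^Suc n" unfolding dy_def a_def by simp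
  have e2: "dy (Suc n) t = of_int b / 2^Suc n" unfolding dy_def b_def by simp
  show ?thesis unfolding e1 e2
    using adjI[OF H r _ _ b2 bl] n a0 by simp
qed

lemma dy_close:
  assumes H: "dyH f N r" and r: "0 \<le> r" and n: "n \<ge> N"
    and s: "0 \<le> s" "s \<le> 1" and t: "0 \<le> t" "t \<le> 1" and d: "\<bar>s - t\<bar> \<le> 1 / 2^n"
  shows "\<bar>f (dy n s) - f (dy n t)\<bar> \<le> r^n"
proof -
  have gen: "\<bar>f (dy n v) - f (dy n u)\<bar> \<le> r^n"
    if u: "0 \<le> u" "u \<le> 1" and v: "0 \<le> v" "v \<le> 1" and uv: "u \<le> v" "v - u \<le> 1/2^n" for u v
  proof -
    define a where "a = \<lfloor>2^n * u\<rfloor>"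
    define b where "b = \<lfloor>2^n * v\<rfloor>"
    have "a \<le> b" unfolding a_def b_def using uv by (intro floor_mono) simp
    moreover have "2^n * v \<le> 2^n * u + 1" using uv by (simp add: field_simps)
    then have "b \<le> \<lfloor>2^n * u + 1\<rfloor>" unfolding b_def by (rule floor_mono)
    then have "b \<le> a + 1" unfolding a_def by simp
    moreover have "0 \<le> a" using dy_range[OF u] a_def by simp
    moreover have "b \<le> 2^n" using dy_range[OF v] b_def by simp
    ultimately have "\<bar>f (of_int b / 2^n) - f (of_int a / 2^n)\<bar> \<le> r^n"
      by (intro adjI[OF H r n]) auto
    then show ?thesis unfolding dy_def a_def b_def .
  qed
  show ?thesis
  proof (cases "s \<le> t")
    case True then show ?thesis using gen[of s t] s t d by (simp add: abs_minus_commute)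
  next
    case False then show ?thesis using gen[of t s] s t d by simp
  qed
qed

lemma rpow_eq: "0 < (\<beta>::real) \<Longrightarrow> (2 powr (-\<beta>))^n = (1/2^n) powr \<beta>"
  by (simp add: powr_realpow[symmetric] powr_powr powr_minus_divide powr_divide mult.commute)

lemma dy_holder:
  assumes H: "dyH f N r" and rdef: "r = 2 powr (-\<beta>)" and b: "0 < \<beta>"
  shows "(\<forall>t\<in>{0..1}. convergent (\<lambda>n. f (dy n t))) \<and> holder_on \<beta> {0..1} (\<lambda>t. lim (\<lambda>n. f (dy n t)))"
proof -
  have r0: "0 < r" unfolding rdef by simp
  have r1: "r < 1" unfolding rdef using b by (simp add: powr_less_one)
  define c0 where "c0 = 1 / (1 - r)"
  have c0: "c0 > 0" unfolding c0_def using r1 by simp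
  define g where "g t = lim (\<lambda>n. f (dy n t))" for t
  have conv: "convergent (\<lambda>n. f (dy n t)) \<and> (\<forall>m\<ge>N. \<bar>g t - f (dy m t)\<bar> \<le> c0 * r^m)"
    if t: "0 \<le> t" "t \<le> 1" for t
  proof -
    have G: "convergent (\<lambda>n. f (dy n t)) \<and> (\<forall>m\<ge>N. \<bar>lim (\<lambda>n. f (dy n t)) - f (dy m t)\<bar> \<le> r * r^m / (1 - r))"
      by (rule geom_conv) (use dy_step[OF H _ _ t] r0 r1 in auto)
    have "r * r^m / (1 - r) \<le> c0 * r^m" for m
    proof -
      have "r * r^m \<le> r^m" using r0 r1 by (simp add: mult_left_le_one_le)
      then have "r * r^m / (1 - r) \<le> r^m / (1 - r)" using r1 by (simp add: divide_right_mono)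
      then show ?thesis unfolding c0_def by simp
    qed
    then show ?thesis using G unfolding g_def by (meson order_trans)
  qed
  have close: "\<bar>g s - g t\<bar> \<le> (2*c0+1) * r^m"
    if s: "0 \<le> s" "s \<le> 1" and t: "0 \<le> t" "t \<le> 1" and m: "m \<ge> N" and d: "\<bar>s - t\<bar> \<le> 1/2^m" for s t m
  proof -
    have "\<bar>g s - f (dy m s)\<bar> \<le> c0 * r^m" using conv[OF s] m by auto
    moreover have "\<bar>g t - f (dy m t)\<bar> \<le> c0 * r^m" using conv[OF t] m by auto
    moreover have "\<bar>f (dy m s) - f (dy m t)\<bar> \<le> r^m" using dy_close[OF H _ m s t d] r0 by simp
    ultimately show ?thesis by (simp add: algebra_simps)
  qed
  define B where "B = c0 + (\<Sum>k\<in>{0..2^N}. \<bar>f (of_int k / 2^N)\<bar>)"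
  have bnd: "\<bar>g u\<bar> \<le> B" if u: "0 \<le> u" "u \<le> 1" for u
  proof -
    have "\<bar>g u - f (dy N u)\<bar> \<le> c0 * r^N" using conv[OF u] by auto
    moreover have "c0 * r^N \<le> c0" using c0 r0 r1 by (simp add: mult_left_le power_le_one)
    moreover have "\<bar>f (dy N u)\<bar> \<le> (\<Sum>k\<in>{0..2^N}. \<bar>f (of_int k / 2^N)\<bar>)"
    proof -
      have "\<lfloor>2^N * u\<rfloor> \<in> {0..2^N}" using dy_range[OF u, of N] by simp
      then show ?thesis unfolding dy_def
        by (intro member_le_sum[of _ _ "\<lambda>k. \<bar>f (of_int k / 2^N)\<bar>", simplified]) auto
    qed
    ultimately show ?thesis unfolding B_def by linarith
  qed
  have B0: "B \<ge> 0" using bnd[of 0] by simp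
  define K where "K = (2*c0+1) * 2 powr \<beta> + 2*B * (2^N) powr \<beta>"
  have hol: "\<bar>g p - g q\<bar> \<le> K * \<bar>p - q\<bar> powr \<beta>" if p: "0 \<le> p" "p \<le> 1" and q: "0 \<le> q" "q \<le> 1" for p q
  proof -
    define d where "d = \<bar>p - q\<bar>"
    have K1: "0 \<le> (2*c0+1) * 2 powr \<beta>" using c0 by simp
    have K2: "0 \<le> 2*B * (2^N) powr \<beta>" using B0 by simp
    consider "d = 0" | "d > 1/2^N" | "0 < d" "d \<le> 1/2^N" unfolding d_def by linarith
    then show ?thesis
    proof cases
      case 1 then show ?thesis unfolding d_def by simp
    next
      case 2
      have "\<bar>g p - g q\<bar> \<le> 2*B" using bnd[OF p] bnd[OF q] by linarith
      also have "\<dots> \<le> 2*B * (2^N * d) powr \<beta>"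
      proof -
        have "1 \<le> 2^N * d" using 2 by (simp add: field_simps)
        then have "1 \<le> (2^N * d) powr \<beta>" using b by (simp add: ge_one_powr_ge_zero)
        then show ?thesis using B0 by (simp add: mult_le_cancel_left1)
      qed
      also have "\<dots> = 2*B * (2^N) powr \<beta> * d powr \<beta>" using 2 by (simp add: powr_mult)
      also have "\<dots> \<le> K * d powr \<beta>" using mult_nonneg_nonneg[OF K1, of "d powr \<beta>"] unfolding K_def by (simp add: distrib_right)
      finally show ?thesis unfolding d_def .
    next
      case 3
      define x where "x = 1 / d"
      have x: "x \<ge> 2^N" unfolding x_def using 3 by (simp add: field_simps)
      have "(1::real) \<le> 2^N" by simp
      then have x1: "x \<ge> 1" using x by linarith
      have "nat \<lfloor>x\<rfloor> \<ge> 1" using x1 by linarith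
      then obtain m where m: "2^m \<le> nat \<lfloor>x\<rfloor>" "nat \<lfloor>x\<rfloor> < 2^(m+1)"
        using ex_power_ivl1[of 2 "nat \<lfloor>x\<rfloor>"] by auto
      have xm1: "(2::real)^m \<le> x"
      proof -
        have "real (2^m) \<le> real (nat \<lfloor>x\<rfloor>)" using m(1) by (simp only: of_nat_le_iff)
        also have "real (nat \<lfloor>x\<rfloor>) = of_int \<lfloor>x\<rfloor>" using x1 by simp
        also have "\<dots> \<le> x" by simp
        finally show ?thesis by simp
      qed
      have xm2: "x < (2::real)^(m+1)"
      proof -
        have "nat \<lfloor>x\<rfloor> + 1 \<le> 2^(m+1)" using m(2) by linarith
        then have "real (nat \<lfloor>x\<rfloor> + 1) \<le> real (2^(m+1))" by (simp only: of_nat_le_iff)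
        then have A: "real (nat \<lfloor>x\<rfloor>) + 1 \<le> 2^(m+1)" by simp
        have "real (nat \<lfloor>x\<rfloor>) = of_int \<lfloor>x\<rfloor>" using x1 by simp
        moreover have "x < of_int \<lfloor>x\<rfloor> + 1" by linarith
        ultimately show ?thesis using A by linarith
      qed
      have mN: "m \<ge> N"
      proof -
        have "(2::real)^N < 2^(m+1)" using x xm2 by linarith
        then have "N < m + 1" using power_less_imp_less_exp[of "2::real" N "m+1"] by simp
        then show ?thesis by simp
      qed
      have dm: "d \<le> 1/2^m" using xm1 3 unfolding x_def by (simp add: field_simps)
      have dm2: "1/2^(m+1) < d" using xm2 3 unfolding x_def by (simp add: field_simps)
      have "\<bar>g p - g q\<bar> \<le> (2*c0+1) * r^m" using close[OF p q mN] dm unfolding d_def by simp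
      also have "r^m = (2 * (1/2^(m+1))) powr \<beta>" unfolding rdef using rpow_eq[OF b, of m] by simp
      also have "\<dots> = 2 powr \<beta> * (1/2^(m+1)) powr \<beta>" by (subst powr_mult[symmetric]) auto
      also have "\<dots> \<le> 2 powr \<beta> * d powr \<beta>"
        using dm2 b by (intro mult_left_mono powr_mono2) auto
      finally have "\<bar>g p - g q\<bar> \<le> (2*c0+1) * (2 powr \<beta> * d powr \<beta>)" using c0 by (simp add: mult_left_mono)
      also have "\<dots> \<le> K * d powr \<beta>" unfolding K_def using mult_nonneg_nonneg[OF K2, of "d powr \<beta>"] by (simp add: distrib_right mult.assoc)
      finally show ?thesis unfolding d_def .
    qed
  qed
  show ?thesis
  proof
    show "\<forall>t\<in>{0..1}. convergent (\<lambda>n. f (dy n t))" using conv by auto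
    show "holder_on \<beta> {0..1} (\<lambda>t. lim (\<lambda>n. f (dy n t)))"
      unfolding holder_on_def using hol by (intro exI[of _ K]) (auto simp: dist_real_def g_def)
  qed
qed



lemma powr2_pow: "((2::real) powr a)^n = 2 powr (a * real n)"
  by (simp add: powr_realpow[symmetric] powr_powr)

lemma kolmogorov:
  assumes P: "prob_space M" and Xm: "\<And>t. t \<in> {0..1} \<Longrightarrow> X t \<in> borel_measurable M"
    and b: "0 < \<beta>" and C: "0 \<le> C" and p: "0 < p" and qp: "q - \<beta>*p > 1"
    and tail: "\<And>s t \<delta>. s\<in>{0..1} \<Longrightarrow> t\<in>{0..1} \<Longrightarrow> \<delta> > 0 \<Longrightarrow>
        measure M {\<omega>\<in>space M. \<delta> < \<bar>X s \<omega> - X t \<omega>\<bar>} \<le> C * \<bar>s-t\<bar> powr q / \<delta> powr p"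
  shows "\<exists>X'. modification M X X' \<and> (AE \<omega> in M. holder_on \<beta> {0..1} (\<lambda>t. X' t \<omega>))"
proof -
  interpret prob_space M by (rule P)
  define r where "r = (2::real) powr (-\<beta>)"
  have r0: "0 < r" unfolding r_def by simp
  have r1: "r < 1" unfolding r_def using b by (simp add: powr_less_one)
  define Xc where "Xc s = X (max 0 (min 1 s))" for s
  have Xcm[measurable]: "Xc s \<in> borel_measurable M" for s unfolding Xc_def by (intro Xm) auto
  have Xc_eq: "s \<in> {0..1} \<Longrightarrow> Xc s = X s" for s unfolding Xc_def by auto
  define s1 where "s1 = (2::real) powr (- q + \<beta>*p)"
  define \<rho> where "\<rho> = 2 * s1"
  have s10: "0 < s1" unfolding s1_def by simp
  have \<rho>eq: "\<rho> = (2::real) powr (1 - q + \<beta>*p)" unfolding \<rho>_def s1_def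
    using powr_add[of "2::real" 1 "- q + \<beta>*p"] by (simp add: algebra_simps)
  have \<rho>1: "\<rho> < 1" unfolding \<rho>eq using qp by (simp add: powr_less_one)
  have s11: "s1 \<le> \<rho>" unfolding \<rho>_def using s10 by simp
  have q0: "q > 0" using qp b p by (smt (verit) mult_pos_pos)
  have keyb: "C * (1/2^n) powr q / (r^n) powr p = C * s1^n" for n :: nat
  proof -
    have e1: "(1/2^n) powr q = 2 powr (- q * n)"
      by (simp add: powr_realpow[symmetric] powr_powr powr_minus_divide[symmetric] mult.commute)
    have e2: "(r^n) powr p = 2 powr (-\<beta> * n * p)" unfolding r_def by (simp add: powr2_pow powr_powr)
    have e3: "(2 powr (- q + \<beta>*p))^n = 2 powr ((- q + \<beta>*p) * n)" by (rule powr2_pow)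
    have e4: "2 powr (- q * n) / 2 powr (-\<beta> * n * p) = (2::real) powr ((- q + \<beta>*p) * n)"
      by (simp add: powr_diff[symmetric] algebra_simps)
    show ?thesis unfolding s1_def e1 e2 e3 e4[symmetric] by simp
  qed
  define A where "A n = (\<Union>k\<in>{0..<2^n::int}. {\<omega>\<in>space M. r^n < \<bar>Xc (of_int (k+1) / 2^n) \<omega> - Xc (of_int k / 2^n) \<omega>\<bar>})" for n
  have Am[measurable]: "A n \<in> sets M" for n unfolding A_def by measurable
  have Ab: "measure M (A n) \<le> C * \<rho>^n" for n
  proof -
    have "measure M (A n) \<le> (\<Sum>k\<in>{0..<2^n::int}. measure M {\<omega>\<in>space M. r^n < \<bar>Xc (of_int (k+1) / 2^n) \<omega> - Xc (of_int k / 2^n) \<omega>\<bar>})"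
      unfolding A_def by (rule measure_UNION_le) auto
    also have "\<dots> \<le> (\<Sum>k\<in>{0..<2^n::int}. C * (1/2^n) powr q / (r^n) powr p)"
    proof (rule sum_mono)
      fix k :: int assume k: "k \<in> {0..<2^n}"
      have k1: "of_int k / 2^n \<in> {0..(1::real)}" and k2: "of_int (k+1) / 2^n \<in> {0..(1::real)}"
      proof -
        have "k + 1 \<le> 2^n" using k by auto
        then have "real_of_int (k+1) \<le> 2^n" by (metis of_int_le_iff of_int_numeral of_int_power)
        then show "of_int (k+1) / 2^n \<in> {0..(1::real)}" using k by auto
        then show "of_int k / 2^n \<in> {0..(1::real)}" using k by (auto simp: divide_le_eq)
      qed
      have "measure M {\<omega>\<in>space M. r^n < \<bar>Xc (of_int (k+1) / 2^n) \<omega> - Xc (of_int k / 2^n) \<omega>\<bar>}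
          \<le> C * \<bar>of_int (k+1) / 2^n - of_int k / 2^n\<bar> powr q / (r^n) powr p"
        unfolding Xc_eq[OF k1] Xc_eq[OF k2] by (rule tail[OF k2 k1]) (use r0 in simp)
      also have "\<bar>of_int (k+1) / 2^n - of_int k / 2^n\<bar> = (1/2^n::real)" by (simp add: diff_divide_distrib[symmetric])
      finally show "measure M {\<omega>\<in>space M. r^n < \<bar>Xc (of_int (k+1) / 2^n) \<omega> - Xc (of_int k / 2^n) \<omega>\<bar>}
          \<le> C * (1/2^n) powr q / (r^n) powr p" .
    qed
    also have "\<dots> = 2^n * (C * s1^n)" unfolding keyb by simp
    also have "\<dots> = C * \<rho>^n" unfolding \<rho>_def by (simp add: power_mult_distrib)
    finally show ?thesis .
  qed
  have sumC: "summable (\<lambda>n. C * \<rho>^n)" using \<rho>1 s10 unfolding \<rho>_def by (intro summable_mult summable_geometric) auto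
  have AE_A: "AE \<omega> in M. eventually (\<lambda>n. \<omega> \<in> space M - A n) sequentially"
  proof (rule borel_cantelli_AE1)
    show "summable (\<lambda>n. measure M (A n))"
      by (rule summable_comparison_test[OF _ sumC]) (use Ab in auto)
  qed (auto simp: emeasure_eq_measure)
  define G where "G = {\<omega>\<in>space M. \<exists>N. dyH (\<lambda>s. Xc s \<omega>) N r}"
  have Gm[measurable]: "G \<in> sets M" unfolding G_def dyH_def by measurable
  have AE_G: "AE \<omega> in M. \<omega> \<in> G"
    using AE_A
  proof eventually_elim
    case (elim \<omega>)
    then obtain N where N: "\<And>n. n \<ge> N \<Longrightarrow> \<omega> \<in> space M - A n" by (auto simp: eventually_sequentially)
    have "dyH (\<lambda>s. Xc s \<omega>) N r" unfolding dyH_def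
    proof (intro allI impI)
      fix n k assume "N \<le> n" "0 \<le> (k::int)" "k < 2^n"
      then show "\<bar>Xc (real_of_int (k + 1) / 2 ^ n) \<omega> - Xc (real_of_int k / 2 ^ n) \<omega>\<bar> \<le> r ^ n"
        using N[of n] unfolding A_def by (auto simp: not_less)
    qed
    moreover have "\<omega> \<in> space M" using N[of N] by auto
    ultimately show ?case unfolding G_def by auto
  qed
  define X' where "X' t \<omega> = lim (\<lambda>n. indicator G \<omega> * Xc (dy n t) \<omega>)" for t \<omega>
  have onG: "\<omega> \<in> G \<Longrightarrow> X' t \<omega> = lim (\<lambda>n. Xc (dy n t) \<omega>)" for t \<omega> unfolding X'_def by simp
  have offG: "\<omega> \<notin> G \<Longrightarrow> X' t \<omega> = 0" for t \<omega> unfolding X'_def by (simp add: limI)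
  have holdG: "\<omega> \<in> G \<Longrightarrow> (\<forall>t\<in>{0..1}. convergent (\<lambda>n. Xc (dy n t) \<omega>)) \<and> holder_on \<beta> {0..1} (\<lambda>t. X' t \<omega>)" for \<omega>
  proof -
    assume "\<omega> \<in> G"
    then obtain N where "dyH (\<lambda>s. Xc s \<omega>) N r" unfolding G_def by auto
    from dy_holder[OF this r_def b] show ?thesis using onG[OF \<open>\<omega> \<in> G\<close>] by simp
  qed
  have mod: "modification M X X'" unfolding modification_def
  proof (intro ballI conjI)
    fix t :: real assume t: "t \<in> {0..1}"
    show "X' t \<in> borel_measurable M"
    proof (rule borel_measurable_LIMSEQ_metric[of "\<lambda>n \<omega>. indicator G \<omega> * Xc (dy n t) \<omega>"])
      fix \<omega> assume "\<omega> \<in> space M"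
      show "(\<lambda>n. indicator G \<omega> * Xc (dy n t) \<omega>) \<longlonglongrightarrow> X' t \<omega>"
      proof (cases "\<omega> \<in> G")
        case True
        then have "convergent (\<lambda>n. Xc (dy n t) \<omega>)" using holdG t by auto
        then show ?thesis using True unfolding X'_def by (simp add: convergent_LIMSEQ_iff)
      next
        case False then show ?thesis using offG[OF False] by simp
      qed
    qed measurable
    define Bs where "Bs n = {\<omega>\<in>space M. r^n < \<bar>Xc (dy n t) \<omega> - X t \<omega>\<bar>}" for n
    have Bm[measurable]: "Bs n \<in> sets M" for n unfolding Bs_def using Xm[OF t] by measurable
    have Bb: "measure M (Bs n) \<le> C * \<rho>^n" for n
    proof -
      have dt: "dy n t \<in> {0..1}" using dy_range[of t n] t by auto
      have "measure M (Bs n) \<le> C * \<bar>dy n t - t\<bar> powr q / (r^n) powr p"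
        unfolding Bs_def Xc_eq[OF dt] by (rule tail[OF dt t]) (use r0 in simp)
      also have "\<dots> \<le> C * (1/2^n) powr q / (r^n) powr p"
      proof -
        have "\<bar>dy n t - t\<bar> \<le> 1/2^n" using dy_range[of t n] t by auto
        then have "\<bar>dy n t - t\<bar> powr q \<le> (1/2^n) powr q" using q0 by (intro powr_mono2) auto
        then show ?thesis using C by (intro divide_right_mono mult_left_mono) auto
      qed
      also have "\<dots> = C * s1^n" by (rule keyb)
      also have "\<dots> \<le> C * \<rho>^n" using s11 s10 C by (intro mult_left_mono power_mono) auto
      finally show ?thesis .
    qed
    have AE_B: "AE \<omega> in M. eventually (\<lambda>n. \<omega> \<in> space M - Bs n) sequentially"
    proof (rule borel_cantelli_AE1)
      show "summable (\<lambda>n. measure M (Bs n))"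
        by (rule summable_comparison_test[OF _ sumC]) (use Bb in auto)
    qed (auto simp: emeasure_eq_measure)
    show "AE \<omega> in M. X' t \<omega> = X t \<omega>"
      using AE_B AE_G
    proof eventually_elim
      case (elim \<omega>)
      have ev: "eventually (\<lambda>n. norm (Xc (dy n t) \<omega> - X t \<omega>) \<le> r^n) sequentially"
        using elim(1) by eventually_elim (auto simp: Bs_def)
      have "(\<lambda>n. Xc (dy n t) \<omega> - X t \<omega>) \<longlonglongrightarrow> 0"
        by (rule Lim_null_comparison[OF ev]) (use r0 r1 in \<open>simp add: LIMSEQ_power_zero\<close>)
      then have "(\<lambda>n. Xc (dy n t) \<omega> - X t \<omega> + X t \<omega>) \<longlonglongrightarrow> 0 + X t \<omega>" by (intro tendsto_intros)
      then have "(\<lambda>n. Xc (dy n t) \<omega>) \<longlonglongrightarrow> X t \<omega>" by simp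
      then show ?case using onG[OF elim(2)] by (simp add: limI)
    qed
  qed
  have "AE \<omega> in M. holder_on \<beta> {0..1} (\<lambda>t. X' t \<omega>)"
    using AE_G by eventually_elim (use holdG in auto)
  then show ?thesis using mod by blast
qed


lemma gauss_tail:
  assumes P: "prob_space M" and G: "centered_gaussian_rv M W" and V: "(\<integral>\<omega>. (W \<omega>)^2 \<partial>M) \<le> V"
    and d: "\<delta> > 0" and m: "m \<ge> 1"
  shows "measure M {\<omega>\<in>space M. \<delta> < \<bar>W \<omega>\<bar>} \<le> (fact (2*m) / (2^m * fact m)) * V^m / \<delta>^(2*m)"
proof -
  interpret prob_space M by (rule P)
  have Wm[measurable]: "W \<in> borel_measurable M" using G unfolding centered_gaussian_rv_def by auto
  obtain \<sigma> where s0: "\<sigma> \<ge> 0" and mom: "\<And>k. integrable M (\<lambda>\<omega>. W \<omega> ^ (2*k)) \<and>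
            (\<integral>\<omega>. W \<omega> ^ (2*k) \<partial>M) = \<sigma>^(2*k) * (fact (2*k) / (2^k * fact k))"
    using gauss_moment[OF P G] by blast
  have "(\<integral>\<omega>. (W \<omega>)^2 \<partial>M) = \<sigma>^2" using mom[of 1] by simp
  then have sV: "\<sigma>^2 \<le> V" using V by simp
  define c where "c = fact (2*m) / (2^m * fact m :: real)"
  have c0: "c \<ge> 0" unfolding c_def by simp
  have "measure M {\<omega>\<in>space M. \<delta> < \<bar>W \<omega>\<bar>} \<le> measure M {\<omega>\<in>space M. W \<omega> ^ (2*m) \<ge> \<delta>^(2*m)}"
  proof (rule finite_measure_mono)
    show "{\<omega>\<in>space M. \<delta> < \<bar>W \<omega>\<bar>} \<subseteq> {\<omega>\<in>space M. W \<omega> ^ (2*m) \<ge> \<delta>^(2*m)}"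
    proof safe
      fix \<omega> assume "\<delta> < \<bar>W \<omega>\<bar>"
      then have "\<delta>^(2*m) \<le> \<bar>W \<omega>\<bar>^(2*m)" using d by (intro power_mono) auto
      then show "\<delta>^(2*m) \<le> W \<omega> ^ (2*m)" by (simp add: power_even_abs)
    qed
  qed measurable
  also have "\<dots> \<le> (\<integral>\<omega>. W \<omega> ^ (2*m) \<partial>M) / \<delta>^(2*m)"
    by (rule integral_Markov_inequality_measure) (use mom[of m] d in \<open>auto simp: zero_le_even_power\<close>)
  also have "\<dots> = \<sigma>^(2*m) * c / \<delta>^(2*m)" using mom[of m] unfolding c_def by simp
  also have "\<dots> \<le> V^m * c / \<delta>^(2*m)"
  proof -
    have "\<sigma>^(2*m) = (\<sigma>^2)^m" by (simp add: power_mult)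
    also have "\<dots> \<le> V^m" using sV by (intro power_mono) auto
    finally show ?thesis using c0 d by (intro divide_right_mono mult_right_mono) auto
  qed
  finally show ?thesis unfolding c_def by (simp add: mult.commute)
qed

lemma gp_lin:
  assumes "zero_mean_gaussian_process M T X" "finite I" "I \<subseteq> T"
  shows "centered_gaussian_rv M (\<lambda>\<omega>. \<Sum>i\<in>I. c i * X i \<omega>)"
  using assms unfolding zero_mean_gaussian_process_def by auto

lemma gp_single:
  assumes Z: "zero_mean_gaussian_process M {0..1} Z" and t: "t \<in> {0..1}"
  shows "centered_gaussian_rv M (Z t)"
proof -
  have "centered_gaussian_rv M (\<lambda>\<omega>. \<Sum>i\<in>{t}. (\<lambda>_. 1) i * Z i \<omega>)"
    by (rule gp_lin[OF Z]) (use t in auto)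
  then show ?thesis by simp
qed

lemma gp_diff:
  assumes Z: "zero_mean_gaussian_process M {0..1} Z" and s: "s \<in> {0..1}" and t: "t \<in> {0..1}"
  shows "centered_gaussian_rv M (\<lambda>\<omega>. Z s \<omega> - Z t \<omega>)"
proof (cases "s = t")
  case True
  have "centered_gaussian_rv M (\<lambda>\<omega>. \<Sum>i\<in>{}. (\<lambda>_. 0) i * Z i \<omega>)"
    by (rule gp_lin[OF Z]) auto
  then show ?thesis using True by simp
next
  case False
  have "centered_gaussian_rv M (\<lambda>\<omega>. \<Sum>i\<in>{s,t}. (\<lambda>i. if i = s then 1 else -1) i * Z i \<omega>)"
    by (rule gp_lin[OF Z]) (use s t in auto)
  then show ?thesis using False by simp
qed

lemma abs_mult_le_sq: "\<bar>(a::real) * b\<bar> \<le> a^2 + b^2"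
proof -
  have "0 \<le> (\<bar>a\<bar> - \<bar>b\<bar>)^2" by simp
  then have h: "2 * \<bar>a\<bar> * \<bar>b\<bar> \<le> \<bar>a\<bar>^2 + \<bar>b\<bar>^2" by (simp add: power2_diff)
  have h0: "0 \<le> \<bar>a\<bar> * \<bar>b\<bar>" by simp
  have e: "\<bar>a * b\<bar> = \<bar>a\<bar> * \<bar>b\<bar>" "\<bar>a\<bar>^2 = a^2" "\<bar>b\<bar>^2 = b^2" by (simp_all add: abs_mult)
  show ?thesis using h h0 unfolding e by linarith
qed

lemma gp_var:
  assumes Z: "zero_mean_gaussian_process M {0..1} Z" and s: "s \<in> {0..1}" and t: "t \<in> {0..1}"
  shows "(\<integral>\<omega>. (Z s \<omega> - Z t \<omega>)^2 \<partial>M) = cov_fun M Z s s - 2 * cov_fun M Z s t + cov_fun M Z t t"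
proof -
  have P: "prob_space M" using Z unfolding zero_mean_gaussian_process_def by auto
  have sq: "integrable M (\<lambda>\<omega>. (Z u \<omega>)^2)" if u: "u \<in> {0..1}" for u
    using gauss_moment[OF P gp_single[OF Z u]] by (metis mult_1_right)
  have me[measurable]: "Z u \<in> borel_measurable M" if "u \<in> {0..1}" for u
    using Z that unfolding zero_mean_gaussian_process_def by auto
  have pr: "integrable M (\<lambda>\<omega>. Z u \<omega> * Z v \<omega>)" if u: "u \<in> {0..1}" and v: "v \<in> {0..1}" for u v
  proof (rule Bochner_Integration.integrable_bound[of _ "\<lambda>\<omega>. (Z u \<omega>)^2 + (Z v \<omega>)^2"])
    show "integrable M (\<lambda>\<omega>. (Z u \<omega>)^2 + (Z v \<omega>)^2)" using sq[OF u] sq[OF v] by simp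
    show "(\<lambda>\<omega>. Z u \<omega> * Z v \<omega>) \<in> borel_measurable M" using me[OF u] me[OF v] by measurable
    show "AE \<omega> in M. norm (Z u \<omega> * Z v \<omega>) \<le> norm ((Z u \<omega>)^2 + (Z v \<omega>)^2)"
      using abs_mult_le_sq by auto
  qed
  have "(\<lambda>\<omega>. (Z s \<omega> - Z t \<omega>)^2) = (\<lambda>\<omega>. Z s \<omega> * Z s \<omega> - 2 * (Z s \<omega> * Z t \<omega>) + Z t \<omega> * Z t \<omega>)"
    by (rule ext) (simp add: power2_eq_square algebra_simps)
  then show ?thesis unfolding cov_fun_def using pr[OF s s] pr[OF s t] pr[OF t t] by simp
qed

lemma cov_sym: "cov_fun M Z s t = cov_fun M Z t s"
  unfolding cov_fun_def by (simp add: mult.commute)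

lemma gp_kolmogorov:
  assumes Z: "zero_mean_gaussian_process M {0..1} Z" and K: "K \<ge> 0" and a: "0 < \<alpha>"
    and var: "\<And>s t. s \<in> {0..1} \<Longrightarrow> t \<in> {0..1} \<Longrightarrow>
        cov_fun M Z s s - 2 * cov_fun M Z s t + cov_fun M Z t t \<le> K * \<bar>s - t\<bar> powr \<alpha>"
    and b: "0 < \<beta>" "\<beta> < \<alpha> / 2"
  shows "\<exists>Z'. modification M Z Z' \<and> (AE \<omega> in M. holder_on \<beta> {0..1} (\<lambda>t. Z' t \<omega>))"
proof -
  have P: "prob_space M" using Z unfolding zero_mean_gaussian_process_def by auto
  have me: "Z u \<in> borel_measurable M" if "u \<in> {0..1}" for u
    using Z that unfolding zero_mean_gaussian_process_def by auto
  define m :: nat where "m = nat \<lceil>1 / (\<alpha> - 2*\<beta>)\<rceil> + 1"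
  have ab: "\<alpha> - 2*\<beta> > 0" using b by simp
  have m1: "m \<ge> 1" unfolding m_def by simp
  have "real m > 1 / (\<alpha> - 2*\<beta>)" unfolding m_def by linarith
  then have mgt: "real m * (\<alpha> - 2*\<beta>) > 1" using ab by (simp add: field_simps)
  define c where "c = fact (2*m) / (2^m * fact m :: real)"
  show ?thesis
  proof (rule kolmogorov[OF P me b(1), where C="c * K^m" and p="2 * real m" and q="\<alpha> * real m"])
    show "0 \<le> c * K^m" unfolding c_def using K by simp
    show "0 < 2 * real m" using m1 by simp
    show "1 < \<alpha> * real m - \<beta> * (2 * real m)" using mgt by (simp add: algebra_simps)
    fix s t \<delta> :: real assume s: "s \<in> {0..1}" and t: "t \<in> {0..1}" and d: "0 < \<delta>"
    have "measure M {\<omega>\<in>space M. \<delta> < \<bar>Z s \<omega> - Z t \<omega>\<bar>} \<le> c * (K * \<bar>s - t\<bar> powr \<alpha>)^m / \<delta>^(2*m)"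
      unfolding c_def
      by (rule gauss_tail[OF P gp_diff[OF Z s t] _ d m1]) (use gp_var[OF Z s t] var[OF s t] in simp)
    also have "\<dots> = c * K^m * \<bar>s - t\<bar> powr (\<alpha> * real m) / \<delta> powr (2 * real m)"
    proof -
      have "(\<bar>s - t\<bar> powr \<alpha>)^m = \<bar>s - t\<bar> powr (\<alpha> * real m)"
      proof -
        have "(\<bar>s - t\<bar> powr \<alpha>)^m = (\<bar>s - t\<bar> powr \<alpha>) powr (real m)"
          using m1 by (intro powr_realpow'[symmetric]) auto
        also have "\<dots> = \<bar>s - t\<bar> powr (\<alpha> * real m)" by (rule powr_powr)
        finally show ?thesis .
      qed
      moreover have "\<delta>^(2*m) = \<delta> powr (2 * real m)" using powr_realpow[OF d, of "2*m"] by simp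
      ultimately show ?thesis by (simp add: power_mult_distrib)
    qed
    finally show "measure M {\<omega>\<in>space M. \<delta> < \<bar>Z s \<omega> - Z t \<omega>\<bar>} \<le> c * K^m * \<bar>s - t\<bar> powr (\<alpha> * real m) / \<delta> powr (2 * real m)" .
  qed auto
qed



lemma holder_nonneg:
  assumes "holder_on a D f" shows "\<exists>K\<ge>0. \<forall>p\<in>D. \<forall>q\<in>D. dist (f p) (f q) \<le> K * dist p q powr a"
proof -
  obtain K where K: "\<forall>p\<in>D. \<forall>q\<in>D. dist (f p) (f q) \<le> K * dist p q powr a"
    using assms unfolding holder_on_def by auto
  have "dist (f p) (f q) \<le> max K 0 * dist p q powr a" if "p \<in> D" "q \<in> D" for p q
    using K that by (meson max.cobounded1 mult_right_mono order_trans powr_ge_zero)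
  then show ?thesis by (intro exI[of _ "max K 0"]) auto
qed

lemma var_bound:
  fixes R :: "real \<Rightarrow> real \<Rightarrow> real"
  assumes K: "\<forall>p\<in>{0..1}\<times>{0..1}. \<forall>q\<in>{0..1}\<times>{0..1}. dist ((\<lambda>(s,t). R s t) p) ((\<lambda>(s,t). R s t) q) \<le> K * dist p q powr \<alpha>"
    and s: "s \<in> {0..1}" and t: "t \<in> {0..1}"
  shows "R s s - 2 * R s t + R t t \<le> 2 * K * \<bar>s - t\<bar> powr \<alpha>"
proof -
  have "\<bar>R s s - R s t\<bar> \<le> K * dist (s,s) (s,t) powr \<alpha>" using K s t
    by (metis (no_types, lifting) SigmaI case_prod_conv dist_real_def)
  also have "dist (s,s) (s,t) = \<bar>s - t\<bar>" by (simp add: dist_Pair_Pair dist_real_def)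
  finally have 1: "\<bar>R s s - R s t\<bar> \<le> K * \<bar>s - t\<bar> powr \<alpha>" .
  have "\<bar>R t t - R s t\<bar> \<le> K * dist (t,t) (s,t) powr \<alpha>" using K s t
    by (metis (no_types, lifting) SigmaI case_prod_conv dist_real_def)
  also have "dist (t,t) (s,t) = \<bar>s - t\<bar>" by (simp add: dist_Pair_Pair dist_real_def)
  finally have 2: "\<bar>R t t - R s t\<bar> \<le> K * \<bar>s - t\<bar> powr \<alpha>" .
  show ?thesis using 1 2 by linarith
qed

lemma Ct_sym:
  assumes H: "in_H M x Ct" and u: "u \<in> {0..1}"
  shows "Ct (- u) = Ct u"
proof -
  have "Ct (0 - u) = cov_fun M x 0 u" using H u unfolding in_H_def by auto
  also have "\<dots> = cov_fun M x u 0" by (rule cov_sym)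
  also have "\<dots> = Ct (u - 0)" using H u unfolding in_H_def by auto
  finally show ?thesis by simp
qed

lemma two_powr_le: "0 < a \<Longrightarrow> a \<le> 1 \<Longrightarrow> 0 \<le> d \<Longrightarrow> (2 * d) powr a \<le> 2 * d powr (a::real)"
proof -
  assume a: "0 < a" "a \<le> 1" and d: "0 \<le> d"
  have "(2 * d) powr a = 2 powr a * d powr a" using d by (simp add: powr_mult)
  also have "2 powr a \<le> 2 powr 1" using a by (intro powr_mono) auto
  then have "2 powr a * d powr a \<le> 2 * d powr a" by (simp add: mult_right_mono)
  finally show ?thesis .
qed

lemma part1:
  assumes H: "in_H M x Ct" and a: "0 < \<alpha>" "\<alpha> \<le> 1" and hol: "holder_on \<alpha> {0..1} Ct"
  shows "holder_on \<alpha> ({0..1} \<times> {0..1}) (\<lambda>(s, t). gen_cov Ct s t)"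
proof -
  obtain K where K0: "K \<ge> 0" and K: "\<forall>p\<in>{0..1}. \<forall>q\<in>{0..1}. dist (Ct p) (Ct q) \<le> K * dist p q powr \<alpha>"
    using holder_nonneg[OF hol] by auto
  have abs_eq: "Ct a = Ct \<bar>a\<bar>" if "a \<in> {-1..1}" for a
  proof (cases "a \<ge> 0")
    case True then show ?thesis by simp
  next
    case False then show ?thesis using Ct_sym[OF H, of "-a"] that by simp
  qed
  have Kext: "\<bar>Ct a - Ct b\<bar> \<le> K * \<bar>a - b\<bar> powr \<alpha>" if "a \<in> {-1..1}" "b \<in> {-1..1}" for a b
  proof -
    have "\<bar>Ct a - Ct b\<bar> = \<bar>Ct \<bar>a\<bar> - Ct \<bar>b\<bar>\<bar>" using abs_eq that by metis
    also have "\<dots> \<le> K * \<bar>\<bar>a\<bar> - \<bar>b\<bar>\<bar> powr \<alpha>" using K that by (auto simp: dist_real_def)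
    also have "\<dots> \<le> K * \<bar>a - b\<bar> powr \<alpha>" using K0 a by (intro mult_left_mono powr_mono2) auto
    finally show ?thesis .
  qed
  define B where "B = \<bar>Ct 0\<bar> + K"
  have Bb: "\<bar>Ct a\<bar> \<le> B" if "a \<in> {-1..1}" for a
  proof -
    have "\<bar>Ct a - Ct 0\<bar> \<le> K * \<bar>a\<bar> powr \<alpha>" using Kext[of a 0] that by simp
    also have "\<bar>a\<bar> powr \<alpha> \<le> 1" using that a powr_mono2[of \<alpha> "\<bar>a\<bar>" 1] by auto
    then have "K * \<bar>a\<bar> powr \<alpha> \<le> K" using K0 by (simp add: mult_left_le)
    finally show ?thesis unfolding B_def by linarith
  qed
  have B0: "B \<ge> 0" unfolding B_def using K0 by simp
  define L where "L = 2 * K + 2 * B * K / \<bar>Ct 0\<bar>"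
  have main: "\<bar>gen_cov Ct s t - gen_cov Ct s' t'\<bar> \<le> L * dist (s,t) (s',t') powr \<alpha>"
    if st: "s \<in> {0..1}" "t \<in> {0..1}" "s' \<in> {0..1}" "t' \<in> {0..1}" for s t s' t'
  proof -
    define d where "d = dist (s,t) (s',t')"
    have d0: "d \<ge> 0" unfolding d_def by simp
    have ds: "\<bar>s - s'\<bar> \<le> d" unfolding d_def using dist_fst_le[of "(s,t)" "(s',t')"] by (simp add: dist_real_def)
    have dt: "\<bar>t - t'\<bar> \<le> d" unfolding d_def using dist_snd_le[of "(s,t)" "(s',t')"] by (simp add: dist_real_def)
    have T1: "\<bar>Ct (s - t) - Ct (s' - t')\<bar> \<le> 2 * K * d powr \<alpha>"
    proof -
      have "\<bar>Ct (s - t) - Ct (s' - t')\<bar> \<le> K * \<bar>(s - t) - (s' - t')\<bar> powr \<alpha>" using st by (intro Kext) auto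
      also have "\<dots> \<le> K * (2 * d) powr \<alpha>" using ds dt K0 a by (intro mult_left_mono powr_mono2) auto
      also have "\<dots> \<le> K * (2 * d powr \<alpha>)" using two_powr_le[OF a d0] K0 by (simp add: mult_left_mono)
      finally show ?thesis by simp
    qed
    have T2: "\<bar>Ct s * Ct (- t) - Ct s' * Ct (- t')\<bar> \<le> 2 * B * K * d powr \<alpha>"
    proof -
      have e: "Ct s * Ct (- t) - Ct s' * Ct (- t') = Ct s * (Ct (- t) - Ct (- t')) + Ct (- t') * (Ct s - Ct s')"
        by (simp add: algebra_simps)
      have "\<bar>Ct s * (Ct (- t) - Ct (- t'))\<bar> \<le> B * (K * d powr \<alpha>)"
      proof -
        have "\<bar>Ct (- t) - Ct (- t')\<bar> \<le> K * \<bar>(-t) - (-t')\<bar> powr \<alpha>" using st by (intro Kext) auto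
        also have "\<dots> \<le> K * d powr \<alpha>" using dt K0 a by (intro mult_left_mono powr_mono2) auto
        finally show ?thesis unfolding abs_mult using Bb[of s] st B0 by (intro mult_mono) auto
      qed
      moreover have "\<bar>Ct (- t') * (Ct s - Ct s')\<bar> \<le> B * (K * d powr \<alpha>)"
      proof -
        have "\<bar>Ct s - Ct s'\<bar> \<le> K * \<bar>s - s'\<bar> powr \<alpha>" using st by (intro Kext) auto
        also have "\<dots> \<le> K * d powr \<alpha>" using ds K0 a by (intro mult_left_mono powr_mono2) auto
        finally show ?thesis unfolding abs_mult using Bb[of "-t'"] st B0 by (intro mult_mono) auto
      qed
      ultimately show ?thesis unfolding e by (simp add: abs_triangle_ineq order_trans[OF abs_triangle_ineq]) 
    qed
    have g: "gen_cov Ct s t - gen_cov Ct s' t' = (Ct (s - t) - Ct (s' - t')) - (Ct s * Ct (- t) - Ct s' * Ct (- t')) / Ct 0"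
      unfolding gen_cov_def by (simp add: diff_divide_distrib)
    have T2': "\<bar>(Ct s * Ct (- t) - Ct s' * Ct (- t')) / Ct 0\<bar> \<le> 2 * B * K * d powr \<alpha> / \<bar>Ct 0\<bar>"
      using T2 by (simp add: divide_right_mono)
    have "\<bar>gen_cov Ct s t - gen_cov Ct s' t'\<bar> \<le> 2 * K * d powr \<alpha> + 2 * B * K * d powr \<alpha> / \<bar>Ct 0\<bar>"
      unfolding g using T1 T2' by linarith
    also have "\<dots> = L * d powr \<alpha>" unfolding L_def by (simp add: algebra_simps)
    finally show ?thesis unfolding d_def .
  qed
  show ?thesis unfolding holder_on_def
    by (intro exI[of _ L]) (use main in \<open>auto simp: dist_real_def\<close>)
qed

lemma x_var:
  assumes H: "in_H M x Ct" and a: "0 < \<alpha>" "\<alpha> \<le> 1"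
    and hol: "holder_on \<alpha> ({0..1} \<times> {0..1}) (\<lambda>(s, t). gen_cov Ct s t)"
  shows "\<exists>K'\<ge>0. \<forall>s\<in>{0..1}. \<forall>t\<in>{0..1}. cov_fun M x s s - 2 * cov_fun M x s t + cov_fun M x t t \<le> K' * \<bar>s - t\<bar> powr \<alpha>"
proof -
  obtain K where K0: "K \<ge> 0" and K: "\<forall>p\<in>{0..1}\<times>{0..1}. \<forall>q\<in>{0..1}\<times>{0..1}. dist ((\<lambda>(s,t). gen_cov Ct s t) p) ((\<lambda>(s,t). gen_cov Ct s t) q) \<le> K * dist p q powr \<alpha>"
    using holder_nonneg[OF hol] by auto
  have cv: "cov_fun M x s t = Ct (s - t)" if "s \<in> {0..1}" "t \<in> {0..1}" for s t
    using H that unfolding in_H_def by auto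
  have V: "cov_fun M x s s - 2 * cov_fun M x s t + cov_fun M x t t = 2 * Ct 0 - 2 * Ct (s - t)"
    if "s \<in> {0..1}" "t \<in> {0..1}" for s t using cv that by simp
  have Z: "zero_mean_gaussian_process M {0..1} x" using H unfolding in_H_def by auto
  show ?thesis
  proof (cases "Ct 0 = 0")
    case True
    have R: "gen_cov Ct s t = Ct (s - t)" for s t unfolding gen_cov_def using True by simp
    show ?thesis
    proof (intro exI[of _ "2*K"] conjI ballI)
      fix s t :: real assume s: "s \<in> {0..1}" and t: "t \<in> {0..1}"
      have "gen_cov Ct s s - 2 * gen_cov Ct s t + gen_cov Ct t t \<le> 2 * K * \<bar>s - t\<bar> powr \<alpha>"
        by (rule var_bound[OF K s t])
      then show "cov_fun M x s s - 2 * cov_fun M x s t + cov_fun M x t t \<le> 2 * K * \<bar>s - t\<bar> powr \<alpha>"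
        unfolding V[OF s t] R using True by simp
    qed (use K0 in simp)
  next
    case False
    have "Ct 0 = cov_fun M x 0 0" using cv[of 0 0] by simp
    also have "\<dots> \<ge> 0" unfolding cov_fun_def by simp
    finally have C0: "Ct 0 > 0" using False by simp
    have cont: "continuous_on {-1..1} Ct" using H unfolding in_H_def by auto
    have "bounded (Ct ` {-1..1})" by (intro compact_imp_bounded compact_continuous_image cont) auto
    then obtain B where B1: "\<forall>x\<in>Ct ` {-1..1}. norm x \<le> B" unfolding bounded_iff by auto
    have Bb: "\<And>u. u \<in> {-1..1} \<Longrightarrow> \<bar>Ct u\<bar> \<le> B" using B1 by auto
    have "0 \<in> {-1..(1::real)}" by simp
    from cont[unfolded continuous_on_iff, rule_format, OF this C0]
    obtain \<delta>0 where d0: "\<delta>0 > 0" and d0b: "\<And>u. u \<in> {-1..1} \<Longrightarrow> dist u 0 < \<delta>0 \<Longrightarrow> dist (Ct u) (Ct 0) < Ct 0" by auto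
    have B0: "B \<ge> 0" using Bb[of 0] by simp
    define K1 where "K1 = max (2*K) (2 * B / \<delta>0 powr \<alpha>)"
    have K1: "K1 \<ge> 0" unfolding K1_def using K0 by simp
    have R0: "gen_cov Ct 0 0 = 0" unfolding gen_cov_def using C0 by simp
    have Ru: "gen_cov Ct u u = Ct 0 - Ct u * Ct u / Ct 0" if "u \<in> {0..1}" for u
      unfolding gen_cov_def using Ct_sym[OF H that] by simp
    have one: "Ct 0 - Ct u \<le> K1 * u powr \<alpha>" if u: "u \<in> {0..1}" for u
    proof (cases "Ct 0 - Ct u \<le> 0")
      case True then show ?thesis using K1 by (smt (verit) mult_nonneg_nonneg powr_ge_zero)
    next
      case pos: False
      show ?thesis
      proof (cases "u < \<delta>0")
        case True
        have "dist (Ct u) (Ct 0) < Ct 0" using d0b[of u] u True by (auto simp: dist_real_def)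
        then have Cu: "Ct u > 0" by (auto simp: dist_real_def)
        have "Ct 0 - Ct u \<le> (Ct 0 - Ct u) * (Ct 0 + Ct u) / Ct 0"
        proof -
          have "(Ct 0 - Ct u) * Ct 0 \<le> (Ct 0 - Ct u) * (Ct 0 + Ct u)" using pos Cu by (intro mult_left_mono) auto
          then show ?thesis using C0 by (simp add: le_divide_eq)
        qed
        also have "\<dots> = gen_cov Ct u u - gen_cov Ct 0 0" unfolding Ru[OF u] R0 using C0
          by (simp add: field_simps power2_eq_square)
        also have "\<dots> \<le> K * dist (u,u) (0,0) powr \<alpha>"
        proof -
          have "dist ((\<lambda>(s,t). gen_cov Ct s t) (u,u)) ((\<lambda>(s,t). gen_cov Ct s t) (0,0)) \<le> K * dist (u,u) (0::real,0::real) powr \<alpha>"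
            using K u by auto
          then show ?thesis by (simp add: dist_real_def)
        qed
        also have "\<dots> \<le> K * (2 * u) powr \<alpha>"
        proof -
          have "dist (u,u) (0,0) = sqrt (u^2 + u^2)" by (simp add: dist_Pair_Pair dist_real_def)
          also have "\<dots> \<le> sqrt ((2*u)^2)" by (intro real_sqrt_le_mono) (simp add: power2_eq_square)
          also have "\<dots> = 2 * u" using u by (simp only: real_sqrt_abs) simp
          finally show ?thesis using K0 a by (intro mult_left_mono powr_mono2) auto
        qed
        also have "\<dots> \<le> K * (2 * u powr \<alpha>)" using two_powr_le[OF a, of u] u K0 by (intro mult_left_mono) auto
        also have "\<dots> \<le> K1 * u powr \<alpha>" unfolding K1_def
          using mult_right_mono[OF max.cobounded1[of "2*K" "2*B/\<delta>0 powr \<alpha>"] powr_ge_zero[of u \<alpha>]] by (simp add: mult.assoc)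
        finally show ?thesis .
      next
        case False
        have "Ct 0 - Ct u \<le> 2 * B" using Bb[of 0] Bb[of u] u by auto
        also have "\<dots> = (2 * B / \<delta>0 powr \<alpha>) * \<delta>0 powr \<alpha>" using d0 by simp
        also have "\<dots> \<le> (2 * B / \<delta>0 powr \<alpha>) * u powr \<alpha>" using False d0 a B0
          by (intro mult_left_mono powr_mono2) auto
        also have "\<dots> \<le> K1 * u powr \<alpha>" unfolding K1_def
          using mult_right_mono[OF max.cobounded2[of "2*B/\<delta>0 powr \<alpha>" "2*K"] powr_ge_zero[of u \<alpha>]] by simp
        finally show ?thesis .
      qed
    qed
    show ?thesis
    proof (intro exI[of _ "2*K1"] conjI ballI)
      fix s t :: real assume s: "s \<in> {0..1}" and t: "t \<in> {0..1}"
      have st: "\<bar>s - t\<bar> \<in> {0..1}" using s t by auto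
      have "Ct (s - t) = Ct \<bar>s - t\<bar>"
      proof (cases "s - t \<ge> 0")
        case True then show ?thesis by simp
      next
        case False then show ?thesis using Ct_sym[OF H st] by simp
      qed
      then show "cov_fun M x s s - 2 * cov_fun M x s t + cov_fun M x t t \<le> 2 * K1 * \<bar>s - t\<bar> powr \<alpha>"
        unfolding V[OF s t] using one[OF st] by simp
    qed (use K1 in simp)
  qed
qed

theorem theorem5p3:
  fixes M :: "'a measure" and x :: "real \<Rightarrow> 'a \<Rightarrow> real" and Ct :: "real \<Rightarrow> real"
    and N :: "'b measure" and y :: "real \<Rightarrow> 'b \<Rightarrow> real" and \<alpha> :: real
  assumes "in_H M x Ct"
    and "generated_by N y Ct"
    and "0 < \<alpha>" and "\<alpha> \<le> 1"
  shows "(holder_on \<alpha> {0..1} Ct \<longrightarrow>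
            holder_on \<alpha> ({0..1} \<times> {0..1}) (\<lambda>(s, t). gen_cov Ct s t))
       \<and> (holder_on \<alpha> ({0..1} \<times> {0..1}) (\<lambda>(s, t). gen_cov Ct s t) \<longrightarrow>
            (\<forall>\<beta>. 0 < \<beta> \<and> \<beta> < \<alpha> / 2 \<longrightarrow>
               (\<exists>y'. modification N y y' \<and> (AE \<omega> in N. holder_on \<beta> {0..1} (\<lambda>t. y' t \<omega>))) \<and>
               (\<exists>x'. modification M x x' \<and> (AE \<omega> in M. holder_on \<beta> {0..1} (\<lambda>t. x' t \<omega>)))))"
proof (intro conjI impI allI)
  assume "holder_on \<alpha> {0..1} Ct"
  then show "holder_on \<alpha> ({0..1} \<times> {0..1}) (\<lambda>(s, t). gen_cov Ct s t)"
    using part1 assms by blast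
next
  fix \<beta> :: real
  assume hol: "holder_on \<alpha> ({0..1} \<times> {0..1}) (\<lambda>(s, t). gen_cov Ct s t)" and b: "0 < \<beta> \<and> \<beta> < \<alpha> / 2"
  obtain K where K0: "K \<ge> 0" and K: "\<forall>p\<in>{0..1}\<times>{0..1}. \<forall>q\<in>{0..1}\<times>{0..1}. dist ((\<lambda>(s,t). gen_cov Ct s t) p) ((\<lambda>(s,t). gen_cov Ct s t) q) \<le> K * dist p q powr \<alpha>"
    using holder_nonneg[OF hol] by auto
  have Zy: "zero_mean_gaussian_process N {0..1} y" and cy: "\<And>s t. s \<in> {0..1} \<Longrightarrow> t \<in> {0..1} \<Longrightarrow> cov_fun N y s t = gen_cov Ct s t"
    using assms(2) unfolding generated_by_def by auto
  show "\<exists>y'. modification N y y' \<and> (AE \<omega> in N. holder_on \<beta> {0..1} (\<lambda>t. y' t \<omega>))"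
  proof (rule gp_kolmogorov[OF Zy _ assms(3) _ conjunct1[OF b] conjunct2[OF b], of "2*K"])
    show "0 \<le> 2 * K" using K0 by simp
    fix s t :: real assume s: "s \<in> {0..1}" and t: "t \<in> {0..1}"
    show "cov_fun N y s s - 2 * cov_fun N y s t + cov_fun N y t t \<le> 2 * K * \<bar>s - t\<bar> powr \<alpha>"
      unfolding cy[OF s s] cy[OF s t] cy[OF t t] by (rule var_bound[OF K s t])
  qed
  obtain K' where K'0: "K' \<ge> 0" and K': "\<forall>s\<in>{0..1}. \<forall>t\<in>{0..1}. cov_fun M x s s - 2 * cov_fun M x s t + cov_fun M x t t \<le> K' * \<bar>s - t\<bar> powr \<alpha>"
    using x_var[OF assms(1) assms(3) assms(4) hol] by auto
  have Zx: "zero_mean_gaussian_process M {0..1} x" using assms(1) unfolding in_H_def by auto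
  show "\<exists>x'. modification M x x' \<and> (AE \<omega> in M. holder_on \<beta> {0..1} (\<lambda>t. x' t \<omega>))"
    by (rule gp_kolmogorov[OF Zx K'0 assms(3) _ conjunct1[OF b] conjunct2[OF b]]) (use K' in auto)
qed

end
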